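(* Let $\kappa$ be an infinite cardinal, let $(G_\alpha:\alpha<\kappa)$ be topological groups, let $G=\prod_{\alpha<\kappa}G_\alpha$ with the product topology and coordinatewise operation, and let $X\subseteq G$. Then the following are equivalent: (1) $X$ is Rothberger bounded in $G$; (2) for each countable set $C\subseteq\kappa$, the set $X_C=\{f\restriction C:f\in X\}$ is a Rothberger bounded subset of $G_C=\prod_{\alpha\in C}G_\alpha$.
   Context: All topological groups are assumed Tychonoff. A subset $X$ of a topological group $(H,* )$ is Rothberger bounded if for every sequence $(U_n:n<\omega)$ of open neighborhoods of the identity there are $h_n\in H$ with $X\subseteq\bigcup_n h_n*U_n$. *)

theory Defs
  imports "HOL-Analysis.Analysis" "HOL-Algebra.Product_Groups" "HOL-Algebra.Coset"
begin

definition topological_group :: "('a, 'b) monoid_scheme \<Rightarrow> 'a topology \<Rightarrow> bool" where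
  "topological_group G T \<longleftrightarrow>
     group G \<and> topspace T = carrier G \<and>
     continuous_map (prod_topology T T) T (\<lambda>(x, y). x \<otimes>\<^bsub>G\<^esub> y) \<and>
     continuous_map T T (\<lambda>x. inv\<^bsub>G\<^esub> x) \<and>
     completely_regular_space T \<and> t1_space T"

definition rothberger_bounded :: "('a, 'b) monoid_scheme \<Rightarrow> 'a topology \<Rightarrow> 'a set \<Rightarrow> bool" where
  "rothberger_bounded G T X \<longleftrightarrow>
     (\<forall>U :: nat \<Rightarrow> 'a set. (\<forall>n. openin T (U n) \<and> \<one>\<^bsub>G\<^esub> \<in> U n) \<longrightarrow>
        (\<exists>h :: nat \<Rightarrow> 'a. (\<forall>n. h n \<in> carrier G) \<and> X \<subseteq> (\<Union>n. h n <#\<^bsub>G\<^esub> U n)))"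

end

theory Submission
  imports Defs
begin

theorem lemma4:
  fixes K :: "'i set"
    and G :: "'i \<Rightarrow> 'a monoid"
    and T :: "'i \<Rightarrow> 'a topology"
    and X :: "('i \<Rightarrow> 'a) set"
  assumes "infinite K"
    and "\<And>\<alpha>. \<alpha> \<in> K \<Longrightarrow> topological_group (G \<alpha>) (T \<alpha>)"
    and "X \<subseteq> carrier (product_group K G)"
  shows "rothberger_bounded (product_group K G) (product_topology T K) X \<longleftrightarrow>
         (\<forall>C. C \<subseteq> K \<and> countable C \<longrightarrow>
            rothberger_bounded (product_group C G) (product_topology T C) ((\<lambda>f. restrict f C) ` X))"
proof -
  have grp: "\<And>i. i \<in> K \<Longrightarrow> group (G i)" and tsp: "\<And>i. i \<in> K \<Longrightarrow> topspace (T i) = carrier (G i)"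
    using assms(2) unfolding topological_group_def by auto
  have tK: "topspace (product_topology T K) = (\<Pi>\<^sub>E i\<in>K. carrier (G i))"
    using tsp by (auto simp: PiE_iff)
  show ?thesis
  proof
    assume L: "rothberger_bounded (product_group K G) (product_topology T K) X"
    show "\<forall>C. C \<subseteq> K \<and> countable C \<longrightarrow>
            rothberger_bounded (product_group C G) (product_topology T C) ((\<lambda>f. restrict f C) ` X)"
    proof (intro allI impI)
      fix C assume CK: "C \<subseteq> K \<and> countable C"
      show "rothberger_bounded (product_group C G) (product_topology T C) ((\<lambda>f. restrict f C) ` X)"
        unfolding rothberger_bounded_def
      proof (intro allI impI)
        fix U :: "nat \<Rightarrow> ('i \<Rightarrow> 'a) set"
        assume hU: "\<forall>n. openin (product_topology T C) (U n) \<and> \<one>\<^bsub>product_group C G\<^esub> \<in> U n"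
        define V where "V n = {f \<in> topspace (product_topology T K). restrict f C \<in> U n}" for n
        have cont: "continuous_map (product_topology T K) (product_topology T C) (\<lambda>f. restrict f C)"
          unfolding continuous_map_componentwise
        proof (intro conjI ballI)
          show "(\<lambda>f. restrict f C) ` topspace (product_topology T K) \<subseteq> extensional C" by auto
          fix k assume "k \<in> C"
          then have "k \<in> K" using CK by auto
          show "continuous_map (product_topology T K) (T k) (\<lambda>x. restrict x C k)"
            using continuous_map_product_projection[OF \<open>k \<in> K\<close>, of T] \<open>k \<in> C\<close> by simp
        qed
        have Vo: "\<forall>n. openin (product_topology T K) (V n) \<and> \<one>\<^bsub>product_group K G\<^esub> \<in> V n"
        proof
          fix n
          have "openin (product_topology T K) (V n)"
            unfolding V_def using openin_continuous_map_preimage[OF cont] hU by blast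
          moreover have "restrict (\<lambda>i\<in>K. \<one>\<^bsub>G i\<^esub>) C = (\<lambda>i\<in>C. \<one>\<^bsub>G i\<^esub>)"
            using CK by (force simp: restrict_def)
          moreover have "(\<lambda>i\<in>K. \<one>\<^bsub>G i\<^esub>) \<in> topspace (product_topology T K)"
            unfolding tK using grp by (auto simp: group.is_monoid monoid.one_closed)
          ultimately show "openin (product_topology T K) (V n) \<and> \<one>\<^bsub>product_group K G\<^esub> \<in> V n"
            using hU by (auto simp: V_def)
        qed
        obtain h where h: "\<forall>n. h n \<in> carrier (product_group K G)"
          "X \<subseteq> (\<Union>n. h n <#\<^bsub>product_group K G\<^esub> V n)"
          using L Vo unfolding rothberger_bounded_def by meson
        show "\<exists>h. (\<forall>n. h n \<in> carrier (product_group C G)) \<and>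
            (\<lambda>f. restrict f C) ` X \<subseteq> (\<Union>n. h n <#\<^bsub>product_group C G\<^esub> U n)"
        proof (intro exI[of _ "\<lambda>n. restrict (h n) C"] conjI allI subsetI)
          fix n show "restrict (h n) C \<in> carrier (product_group C G)"
            using h(1) CK by (auto simp: PiE_iff)
        next
          fix g assume "g \<in> (\<lambda>f. restrict f C) ` X"
          then obtain f where f: "f \<in> X" "g = restrict f C" by auto
          then obtain n v where v: "v \<in> V n" "f = (\<lambda>i\<in>K. h n i \<otimes>\<^bsub>G i\<^esub> v i)"
            using h(2) unfolding l_coset_def by auto
          have geq: "g = (\<lambda>i\<in>C. restrict (h n) C i \<otimes>\<^bsub>G i\<^esub> restrict v C i)"
            using f(2) v(2) CK by (force simp: restrict_def)
          have vin: "restrict v C \<in> U n" using v(1) by (simp add: V_def)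
          have "g \<in> restrict (h n) C <#\<^bsub>product_group C G\<^esub> U n"
            unfolding l_coset_def
          proof (rule UN_I[OF vin])
            show "g \<in> {restrict (h n) C \<otimes>\<^bsub>product_group C G\<^esub> restrict v C}"
              unfolding mult_product_group singleton_iff by (rule geq)
          qed
          then show "g \<in> (\<Union>n. restrict (h n) C <#\<^bsub>product_group C G\<^esub> U n)"
            by blast
        qed
      qed
    qed
  next
    assume R: "\<forall>C. C \<subseteq> K \<and> countable C \<longrightarrow>
            rothberger_bounded (product_group C G) (product_topology T C) ((\<lambda>f. restrict f C) ` X)"
    show "rothberger_bounded (product_group K G) (product_topology T K) X"
      unfolding rothberger_bounded_def
    proof (intro allI impI)
      fix U :: "nat \<Rightarrow> ('i \<Rightarrow> 'a) set"
      assume hU: "\<forall>n. openin (product_topology T K) (U n) \<and> \<one>\<^bsub>product_group K G\<^esub> \<in> U n"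
      have "\<forall>n. \<exists>W. finite {i \<in> K. W i \<noteq> topspace (T i)} \<and>
                 (\<forall>i \<in> K. openin (T i) (W i)) \<and> (\<lambda>i\<in>K. \<one>\<^bsub>G i\<^esub>) \<in> Pi\<^sub>E K W \<and> Pi\<^sub>E K W \<subseteq> U n"
      proof
        fix n
        from hU have "openin (product_topology T K) (U n)" "(\<lambda>i\<in>K. \<one>\<^bsub>G i\<^esub>) \<in> U n" by auto
        then show "\<exists>W. finite {i \<in> K. W i \<noteq> topspace (T i)} \<and>
                 (\<forall>i \<in> K. openin (T i) (W i)) \<and> (\<lambda>i\<in>K. \<one>\<^bsub>G i\<^esub>) \<in> Pi\<^sub>E K W \<and> Pi\<^sub>E K W \<subseteq> U n"
          unfolding openin_product_topology_alt by blast
      qed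
      then obtain W where W0: "\<forall>n. finite {i \<in> K. W n i \<noteq> topspace (T i)} \<and>
                 (\<forall>i \<in> K. openin (T i) (W n i)) \<and> (\<lambda>i\<in>K. \<one>\<^bsub>G i\<^esub>) \<in> Pi\<^sub>E K (W n) \<and> Pi\<^sub>E K (W n) \<subseteq> U n"
        using choice[OF \<open>\<forall>n. \<exists>W. _\<close>] by blast
      have W: "\<And>n. finite {i \<in> K. W n i \<noteq> topspace (T i)}"
        "\<And>n i. i \<in> K \<Longrightarrow> openin (T i) (W n i)" "\<And>n. (\<lambda>i\<in>K. \<one>\<^bsub>G i\<^esub>) \<in> Pi\<^sub>E K (W n)"
        "\<And>n. Pi\<^sub>E K (W n) \<subseteq> U n"
        using W0 by blast+
      define C where "C = (\<Union>n. {i \<in> K. W n i \<noteq> topspace (T i)})"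
      have CK: "C \<subseteq> K" "countable C"
        unfolding C_def using W(1) by (auto intro: countable_finite)
      have RC: "rothberger_bounded (product_group C G) (product_topology T C) ((\<lambda>f. restrict f C) ` X)"
        using R CK by blast
      have Uo: "\<forall>n. openin (product_topology T C) (Pi\<^sub>E C (W n)) \<and> \<one>\<^bsub>product_group C G\<^esub> \<in> Pi\<^sub>E C (W n)"
      proof
        fix n
        have "{i \<in> C. W n i \<noteq> topspace (T i)} \<subseteq> {i \<in> K. W n i \<noteq> topspace (T i)}" using CK by auto
        then have "finite {i \<in> C. W n i \<noteq> topspace (T i)}" using W(1) finite_subset by blast
        moreover have "\<forall>i\<in>C. openin (T i) (W n i)" using W(2) CK by auto
        moreover have "(\<lambda>i\<in>C. \<one>\<^bsub>G i\<^esub>) \<in> Pi\<^sub>E C (W n)"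
          using W(3)[of n] CK by (auto simp: PiE_iff)
        ultimately show "openin (product_topology T C) (Pi\<^sub>E C (W n)) \<and> \<one>\<^bsub>product_group C G\<^esub> \<in> Pi\<^sub>E C (W n)"
          by (simp add: openin_PiE_gen)
      qed
      obtain h' where h': "\<forall>n. h' n \<in> carrier (product_group C G)"
          "(\<lambda>f. restrict f C) ` X \<subseteq> (\<Union>n. h' n <#\<^bsub>product_group C G\<^esub> Pi\<^sub>E C (W n))"
        using RC Uo unfolding rothberger_bounded_def by meson
      define h where "h n = (\<lambda>i\<in>K. if i \<in> C then h' n i else \<one>\<^bsub>G i\<^esub>)" for n
      show "\<exists>h. (\<forall>n. h n \<in> carrier (product_group K G)) \<and> X \<subseteq> (\<Union>n. h n <#\<^bsub>product_group K G\<^esub> U n)"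
      proof (intro exI[of _ h] conjI allI subsetI)
        fix n show "h n \<in> carrier (product_group K G)"
          using h'(1) grp by (auto simp: h_def PiE_iff group.is_monoid monoid.one_closed)
      next
        fix f assume fX: "f \<in> X"
        then have fc: "f \<in> (\<Pi>\<^sub>E i\<in>K. carrier (G i))" using assms(3) by auto
        from fX h'(2) obtain n u where u: "u \<in> Pi\<^sub>E C (W n)"
          "restrict f C = (\<lambda>i\<in>C. h' n i \<otimes>\<^bsub>G i\<^esub> u i)"
          unfolding l_coset_def by fastforce
        define v where "v = (\<lambda>i\<in>K. if i \<in> C then u i else f i)"
        have "v \<in> Pi\<^sub>E K (W n)"
        proof -
          have "v i \<in> W n i" if "i \<in> K" for i
          proof (cases "i \<in> C")
            case True then show ?thesis using u(1) that by (auto simp: v_def)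
          next
            case False
            then have "W n i = topspace (T i)" using that unfolding C_def by auto
            then show ?thesis using False that fc tsp by (auto simp: v_def)
          qed
          then show ?thesis by (auto simp: v_def)
        qed
        then have vU: "v \<in> U n" using W(4) by auto
        have "f = (\<lambda>i\<in>K. h n i \<otimes>\<^bsub>G i\<^esub> v i)"
        proof
          fix i show "f i = (\<lambda>i\<in>K. h n i \<otimes>\<^bsub>G i\<^esub> v i) i"
          proof (cases "i \<in> K")
            case False then show ?thesis using fc by (auto simp: PiE_iff extensional_def)
          next
            case True
            show ?thesis
            proof (cases "i \<in> C")
              case True
              then have "f i = h' n i \<otimes>\<^bsub>G i\<^esub> u i" using fun_cong[OF u(2), of i] by simp
              then show ?thesis using True \<open>i \<in> K\<close> by (simp add: h_def v_def)
            next
              case False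
              have "f i \<in> carrier (G i)" using fc True by auto
              then show ?thesis using False True grp[OF True]
                by (simp add: h_def v_def group.is_monoid monoid.l_one)
            qed
          qed
        qed
        then show "f \<in> (\<Union>n. h n <#\<^bsub>product_group K G\<^esub> U n)"
          using vU unfolding l_coset_def by auto
      qed
    qed
  qed
qed

end
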